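(* Let $\mathfrak c\in\mathfrak C$ and let $h$ be a bounded measurable function on $\mathbb R$. Then the series $\sum_{i=1}^{N_+}\mathcal E^+_{\mathfrak c,i}h-\sum_{i=1}^{N_-}\mathcal E^-_{\mathfrak c,i}h$ converges in $L^2(\mathbb R^2)$, so that $\mathcal E_{\mathfrak c}h:=\sum_{i=1}^{N_+}\mathcal E^+_{\mathfrak c,i}h-\sum_{i=1}^{N_-}\mathcal E^-_{\mathfrak c,i}h\in L^2(\mathbb R^2)$.
   Context: $\mathfrak C$ is the set of smooth maps $\mathfrak c=(\mathfrak c_1,\mathfrak c_2):\mathbb R\to\mathbb R^2$ with $\operatorname{supp}\dot{\mathfrak c}\subset[0,1]$ and $\mathfrak c_1(t)>0$ for all $t$. Let $T_\pm=\{t\in(0,1):\pm\dot{\mathfrak c}_2(t)>0\}$; each is a disjoint union of at most countably many open intervals, $T_\pm=\bigcup_{i=1}^{N_\pm}I_{\pm,i}$ with $N_\pm\in\mathbb N\cup\{\infty\}$ (on each $I_{\pm,i}$, $\mathfrak c_2$ is strictly monotone). For $x=(x_1,x_2)\in\mathbb R^2$ define $(\mathcal E^\pm_{\mathfrak c,i}h)(x):=h(t)$ if there is $t\in I_{\pm,i}$ with $\mathfrak c_2(t)=x_2$ and $0\le x_1\le\mathfrak c_1(t)$, and $(\mathcal E^\pm_{\mathfrak c,i}h)(x):=0$ otherwise. *)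

theory Defs
  imports "HOL-Analysis.Analysis" "HOL-Library.Extended_Nat"
begin

definition smooth_fun :: "(real \<Rightarrow> real) \<Rightarrow> bool" where
  "smooth_fun f \<longleftrightarrow> (\<forall>k. \<forall>t. ((deriv ^^ k) f) differentiable (at t))"

definition curve_class :: "(real \<Rightarrow> real) \<Rightarrow> (real \<Rightarrow> real) \<Rightarrow> bool" where
  "curve_class c1 c2 \<longleftrightarrow> smooth_fun c1 \<and> smooth_fun c2
     \<and> closure {t. deriv c1 t \<noteq> 0 \<or> deriv c2 t \<noteq> 0} \<subseteq> {0..1}
     \<and> (\<forall>t. c1 t > 0)"

definition T_plus :: "(real \<Rightarrow> real) \<Rightarrow> real set" where
  "T_plus c2 = {t \<in> {0<..<1}. deriv c2 t > 0}"

definition T_minus :: "(real \<Rightarrow> real) \<Rightarrow> real set" where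
  "T_minus c2 = {t \<in> {0<..<1}. deriv c2 t < 0}"

definition E_op :: "real set \<Rightarrow> (real \<Rightarrow> real) \<Rightarrow> (real \<Rightarrow> real) \<Rightarrow> (real \<Rightarrow> real)
                     \<Rightarrow> real \<times> real \<Rightarrow> real" where
  "E_op I c1 c2 h x =
     (if \<exists>t\<in>I. c2 t = snd x \<and> 0 \<le> fst x \<and> fst x \<le> c1 t
      then h (SOME t. t \<in> I \<and> c2 t = snd x \<and> 0 \<le> fst x \<and> fst x \<le> c1 t)
      else 0)"

definition L2_fun :: "(real \<times> real \<Rightarrow> real) \<Rightarrow> bool" where
  "L2_fun f \<longleftrightarrow> f \<in> borel_measurable lborel \<and> integrable lborel (\<lambda>x. (f x)\<^sup>2)"

definition L2_tendsto :: "(nat \<Rightarrow> real \<times> real \<Rightarrow> real) \<Rightarrow> (real \<times> real \<Rightarrow> real) \<Rightarrow> bool" where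
  "L2_tendsto S F \<longleftrightarrow>
     ((\<lambda>n. \<integral>\<^sup>+ x. ennreal ((S n x - F x)\<^sup>2) \<partial>lborel) \<longlongrightarrow> 0) sequentially"

end

theory Submission imports Defs begin

lemma box_measure:
  fixes C a b :: real
  assumes "0 \<le> C" "a \<le> b"
  shows "emeasure lborel ({0..C} \<times> {a..b}) = ennreal (C * (b - a))"
proof -
  have "emeasure lborel ({0..C} \<times> {a..b}) = emeasure (lborel \<Otimes>\<^sub>M lborel) ({0..C} \<times> {a..b::real})"
    by (simp add: lborel_prod)
  also have "\<dots> = emeasure lborel {0..C} * emeasure lborel {a..b}"
    by (rule lborel.emeasure_pair_measure_Times) auto
  also have "\<dots> = ennreal (C * (b - a))" using assms by (simp add: ennreal_mult)
  finally show ?thesis .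
qed

lemma snd_meas: "(snd :: real\<times>real \<Rightarrow> real) \<in> borel_measurable borel"
  by (intro borel_measurable_continuous_onI continuous_intros)
lemma fst_meas: "(fst :: real\<times>real \<Rightarrow> real) \<in> borel_measurable borel"
  by (intro borel_measurable_continuous_onI continuous_intros)

lemma cc_facts:
  assumes "curve_class c1 c2"
  shows "\<And>t. (c2 has_real_derivative deriv c2 t) (at t)"
    "\<And>t. (deriv c2 has_real_derivative deriv (deriv c2) t) (at t)"
    "continuous_on UNIV (deriv c2)" "continuous_on UNIV (deriv (deriv c2))"
    "continuous_on UNIV c1" "continuous_on UNIV c2" "\<And>t. t < 0 \<Longrightarrow> deriv c2 t = 0"
    "\<And>t. c1 t > 0"
proof -
  have s1: "smooth_fun c1" and s2: "smooth_fun c2" and cl: "closure {t. deriv c1 t \<noteq> 0 \<or> deriv c2 t \<noteq> 0} \<subseteq> {0..1}"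
    and pos: "\<forall>t. c1 t > 0"
    using assms by (auto simp: curve_class_def)
  have d0: "c2 differentiable (at t)" for t
  proof -
    have "(deriv^^0) c2 differentiable (at t)" using s2 unfolding smooth_fun_def by blast
    then show ?thesis by (simp)
  qed
  have d1: "deriv c2 differentiable (at t)" for t
  proof -
    have "(deriv^^1) c2 differentiable (at t)" using s2 unfolding smooth_fun_def by blast
    then show ?thesis by (simp)
  qed
  have d2: "deriv (deriv c2) differentiable (at t)" for t
  proof -
    have "(deriv^^2) c2 differentiable (at t)" using s2 unfolding smooth_fun_def by blast
    then show ?thesis by (simp add: numeral_2_eq_2)
  qed
  have e0: "c1 differentiable (at t)" for t
  proof -
    have "(deriv^^0) c1 differentiable (at t)" using s1 unfolding smooth_fun_def by blast
    then show ?thesis by (simp)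
  qed
  show "\<And>t. (c2 has_real_derivative deriv c2 t) (at t)"
    using d0 DERIV_deriv_iff_real_differentiable by blast
  show "\<And>t. (deriv c2 has_real_derivative deriv (deriv c2) t) (at t)"
    using d1 DERIV_deriv_iff_real_differentiable by blast
  show "continuous_on UNIV (deriv c2)"
    using d1 by (meson continuous_at_imp_continuous_on differentiable_imp_continuous_within)
  show "continuous_on UNIV (deriv (deriv c2))"
    using d2 by (meson continuous_at_imp_continuous_on differentiable_imp_continuous_within)
  show "continuous_on UNIV c1"
    using e0 by (meson continuous_at_imp_continuous_on differentiable_imp_continuous_within)
  show "continuous_on UNIV c2"
    using d0 by (meson continuous_at_imp_continuous_on differentiable_imp_continuous_within)
  show "deriv c2 t = 0" if "t < 0" for t
  proof (rule ccontr)
    assume "deriv c2 t \<noteq> 0"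
    then have "t \<in> {t. deriv c1 t \<noteq> 0 \<or> deriv c2 t \<noteq> 0}" by simp
    then have "t \<in> closure {t. deriv c1 t \<noteq> 0 \<or> deriv c2 t \<noteq> 0}"
      by (rule subsetD[OF closure_subset])
    then have "t \<in> {0..1}" using cl by (rule subsetD[rotated])
    with \<open>t<0\<close> show False by simp
  qed
  show "\<And>t. c1 t > 0" using pos by blast
qed


definition Tsig :: "real \<Rightarrow> (real \<Rightarrow> real) \<Rightarrow> real set" where
  "Tsig s c2 = {t \<in> {0<..<1}. s * deriv c2 t > 0}"

lemma Tsig_plus: "T_plus c2 = Tsig 1 c2" and Tsig_minus: "T_minus c2 = Tsig (-1) c2"
  by (auto simp: T_plus_def T_minus_def Tsig_def)

lemma open_Tsig:
  assumes "curve_class c1 c2"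
  shows "open (Tsig s c2)"
proof -
  have c: "continuous_on UNIV (deriv c2)" using cc_facts[OF assms] by blast
  have "Tsig s c2 = {0<..<1} \<inter> {t. (\<lambda>_. 0) t < (\<lambda>t. s * deriv c2 t) t}"
    by (auto simp: Tsig_def)
  moreover have "open {t. (\<lambda>_. 0::real) t < (\<lambda>t. s * deriv c2 t) t}"
    by (rule open_Collect_less) (auto intro!: continuous_intros c)
  ultimately show ?thesis by auto
qed

lemma comp_basic:
  assumes "curve_class c1 c2" "I \<in> components (Tsig s c2)"
  shows "I \<subseteq> {0<..<1}" "I \<noteq> {}" "is_interval I" "open I" "\<And>t. t \<in> I \<Longrightarrow> s * deriv c2 t > 0"
proof -
  have sub: "I \<subseteq> Tsig s c2" using assms(2) in_components_subset by blast
  then show "I \<subseteq> {0<..<1}" by (auto simp: Tsig_def)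
  show "I \<noteq> {}" using assms(2) in_components_nonempty by blast
  show "is_interval I" using assms(2) in_components_connected is_interval_connected_1 by blast
  show "open I" using open_components[OF open_Tsig[OF assms(1)] assms(2)] .
  show "\<And>t. t \<in> I \<Longrightarrow> s * deriv c2 t > 0" using sub by (auto simp: Tsig_def)
qed

lemma comp_inf:
  assumes cc: "curve_class c1 c2" and I: "I \<in> components (Tsig s c2)"
  shows "0 \<le> Inf I" "deriv c2 (Inf I) = 0" "\<And>t. t \<in> I \<Longrightarrow> Inf I \<le> t"
proof -
  note b = comp_basic[OF cc I]
  have bdd: "bdd_below I" using b(1) by (auto intro!: bdd_belowI[of _ 0])
  show lo: "\<And>t. t \<in> I \<Longrightarrow> Inf I \<le> t" using bdd by (simp add: cInf_lower)
  have acl: "Inf I \<in> closure I" using closure_contains_Inf[OF b(2) bdd] .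
  have "closure I \<subseteq> closure {0<..<1::real}" using b(1) by (rule closure_mono)
  then have "Inf I \<in> {0..1}" using acl by auto
  then show a0: "0 \<le> Inf I" by simp
  have cd: "continuous_on UNIV (deriv c2)" using cc_facts[OF cc] by blast
  have clo: "closed {t. (\<lambda>_. 0) t \<le> (\<lambda>t. s * deriv c2 t) t}"
    by (rule closed_Collect_le) (auto intro!: continuous_intros cd)
  have "I \<subseteq> {t. (\<lambda>_. 0) t \<le> (\<lambda>t. s * deriv c2 t) t}" using b(5) by (auto intro: less_imp_le)
  then have "closure I \<subseteq> {t. (\<lambda>_. 0) t \<le> (\<lambda>t. s * deriv c2 t) t}"
    using clo closure_minimal by blast
  then have ge: "0 \<le> s * deriv c2 (Inf I)" using acl by auto
  have le: "\<not> (0 < s * deriv c2 (Inf I))"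
  proof
    assume pos: "0 < s * deriv c2 (Inf I)"
    show False
    proof (cases "Inf I = 0")
      case True
      have clz0: "closed {t. deriv c2 t = (\<lambda>_. 0) t}"
        by (rule closed_Collect_eq) (auto intro: cd continuous_intros)
      then have clz: "closed {t. deriv c2 t = 0}" by simp
      have "{..<0} \<subseteq> {t. deriv c2 t = 0}" using cc_facts(7)[OF cc] by auto
      then have "closure {..<0::real} \<subseteq> {t. deriv c2 t = 0}" using clz closure_minimal by blast
      then have "deriv c2 0 = 0" by auto
      with pos True show False by simp
    next
      case False
      obtain t where t: "t \<in> I" using b(2) by blast
      have "Inf I < 1" using lo[OF t] b(1) t by fastforce
      with False a0 pos have "Inf I \<in> Tsig s c2" by (auto simp: Tsig_def)
      then obtain e where e: "e > 0" "ball (Inf I) e \<subseteq> Tsig s c2"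
        using open_Tsig[OF cc] open_contains_ball by blast
      obtain u where u: "u \<in> I" "dist u (Inf I) < e" using acl e(1) closure_approachable by blast
      then have "I \<inter> ball (Inf I) e \<noteq> {}" by (auto simp: dist_commute)
      then have "ball (Inf I) e \<subseteq> I" using components_maximal[OF I] e(2) by auto
      moreover have "Inf I - e/2 \<in> ball (Inf I) e" using e(1) by (auto simp: dist_real_def)
      ultimately have "Inf I - e/2 \<in> I" by blast
      from lo[OF this] e(1) show False by simp
    qed
  qed
  show "deriv c2 (Inf I) = 0"
  proof (cases "s = 0")
    case True then show ?thesis using comp_basic(5)[OF cc I] b(2) by auto
  next
    case False with ge le show ?thesis by auto
  qed
qed


lemma bound_on01:
  fixes f :: "real \<Rightarrow> real"
  assumes "continuous_on UNIV f"
  shows "\<exists>M>0. \<forall>t\<in>{0..1}. \<bar>f t\<bar> \<le> M"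
proof -
  have "compact (f ` {0..1})"
    by (rule compact_continuous_image[OF continuous_on_subset[OF assms]]) auto
  then have "bounded (f ` {0..1})" by (rule compact_imp_bounded)
  then obtain M where M: "M > 0" "\<forall>y\<in>f ` {0..1}. norm y \<le> M" using bounded_pos by blast
  then show ?thesis by auto
qed

lemma mvt_bound:
  assumes cc: "curve_class c1 c2" and M: "\<forall>t\<in>{0..1}. \<bar>deriv (deriv c2) t\<bar> \<le> M"
    and a: "0 \<le> a" "a \<le> t" "t \<le> 1" "deriv c2 a = 0"
  shows "\<bar>c2 t - c2 a\<bar> \<le> M * (t - a)^2"
proof (cases "a = t")
  case True then show ?thesis by simp
next
  case False
  then have at: "a < t" using a by simp
  obtain z where z: "a < z" "z < t" "c2 t - c2 a = (t - a) * deriv c2 z"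
    using MVT2[OF at, of c2 "deriv c2"] cc_facts(1)[OF cc] by blast
  obtain y where y: "a < y" "y < z" "deriv c2 z - deriv c2 a = (z - a) * deriv (deriv c2) y"
    using MVT2[OF z(1), of "deriv c2" "deriv (deriv c2)"] cc_facts(2)[OF cc] by blast
  have M0: "0 \<le> M" using bspec[OF M, of 0] by simp
  have "\<bar>deriv (deriv c2) y\<bar> \<le> M" using M y z a by auto
  then have "\<bar>deriv c2 z\<bar> \<le> (z - a) * M" using y a(4) z(1)
    by (simp add: abs_mult mult_left_mono)
  also have "\<dots> \<le> (t - a) * M" using z M0 by (intro mult_right_mono) auto
  finally have "\<bar>c2 t - c2 a\<bar> \<le> (t - a) * ((t - a) * M)" using z(3) at
    by (simp add: abs_mult mult_left_mono)
  moreover have "(t - a) * ((t - a) * M) = M * (t - a)^2"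
    unfolding power2_eq_square by (simp only: mult.commute mult.left_commute)
  ultimately show ?thesis by (rule ord_le_eq_trans)
qed

lemma comp_measure:
  assumes cc: "curve_class c1 c2" and I: "I \<in> components (Tsig s c2)"
  shows "I \<in> sets lborel" "emeasure lborel I = ennreal (measure lborel I)"
    "\<And>t. t \<in> I \<Longrightarrow> t - Inf I \<le> measure lborel I" "measure lborel I \<le> 1"
proof -
  note b = comp_basic[OF cc I]
  show sI: "I \<in> sets lborel" using b(4) by simp
  have le1: "emeasure lborel I \<le> 1"
  proof -
    have "emeasure lborel I \<le> emeasure lborel {0..1::real}"
      using b(1) by (intro emeasure_mono) auto
    then show ?thesis by simp
  qed
  then have fin: "emeasure lborel I \<noteq> \<infinity>" by (auto simp: top_unique)
  show em: "emeasure lborel I = ennreal (measure lborel I)" using fin by (simp add: emeasure_eq_ennreal_measure)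
  show "measure lborel I \<le> 1" by (metis em ennreal_le_1 le1)
  have key: "t - u \<le> measure lborel I" if "t \<in> I" "u \<in> I" "u \<le> t" for t u
  proof -
    have "{u..t} \<subseteq> I" using b(3) that unfolding is_interval_1 by fastforce
    then have "emeasure lborel {u..t} \<le> emeasure lborel I" by (intro emeasure_mono sI)
    then have "ennreal (t - u) \<le> ennreal (measure lborel I)" using that em by simp
    then show ?thesis by (simp add: ennreal_le_iff measure_nonneg)
  qed
  show "t - Inf I \<le> measure lborel I" if t: "t \<in> I" for t
  proof -
    have "t - measure lborel I \<le> Inf I"
    proof (rule cInf_greatest[OF b(2)])
      fix u assume u: "u \<in> I"
      show "t - measure lborel I \<le> u"
      proof (cases "u \<le> t")
        case True then show ?thesis using key[OF t u] by simp
      next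
        case False
        have "0 \<le> measure lborel I" by (rule measure_nonneg)
        with False show ?thesis by linarith
      qed
    qed
    then show ?thesis by simp
  qed
qed


definition Kbox :: "real \<Rightarrow> real \<Rightarrow> real \<Rightarrow> (real \<times> real) set" where
  "Kbox Cm y r = {0..Cm} \<times> {y - r .. y + r}"

lemma E_bound:
  assumes cc: "curve_class c1 c2" and I: "I \<in> components (Tsig s c2)"
    and hB: "\<forall>u. \<bar>h u\<bar> \<le> B" and Cm: "\<forall>t\<in>{0..1}. c1 t \<le> Cm"
    and M: "\<forall>t\<in>{0..1}. \<bar>deriv (deriv c2) t\<bar> \<le> M"
  shows "\<bar>E_op I c1 c2 h x\<bar> \<le> B * indicator (Kbox Cm (c2 (Inf I)) (M * (measure lborel I)^2)) x"
proof -
  have B0: "0 \<le> B" using hB order_trans[OF abs_ge_zero] by blast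
  have M0: "0 \<le> M" using bspec[OF M, of 0] by simp
  show ?thesis
  proof (cases "\<exists>t\<in>I. c2 t = snd x \<and> 0 \<le> fst x \<and> fst x \<le> c1 t")
    case False
    have "E_op I c1 c2 h x = 0" unfolding E_op_def using False by (rule if_not_P)
    then show ?thesis using B0 by simp
  next
    case True
    define t where "t = (SOME t. t \<in> I \<and> c2 t = snd x \<and> 0 \<le> fst x \<and> fst x \<le> c1 t)"
    have ex: "\<exists>t. t \<in> I \<and> c2 t = snd x \<and> 0 \<le> fst x \<and> fst x \<le> c1 t" using True by blast
    have t: "t \<in> I \<and> c2 t = snd x \<and> 0 \<le> fst x \<and> fst x \<le> c1 t"
      unfolding t_def by (rule someI_ex[OF ex])
    have E: "E_op I c1 c2 h x = h t" unfolding E_op_def t_def using True by (rule if_P)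
    have t01: "t \<in> {0<..<1}" using t comp_basic(1)[OF cc I] by blast
    have a: "0 \<le> Inf I" "deriv c2 (Inf I) = 0" "Inf I \<le> t" using comp_inf[OF cc I] t by auto
    have w: "t - Inf I \<le> measure lborel I" using comp_measure(3)[OF cc I] t by blast
    have "\<bar>c2 t - c2 (Inf I)\<bar> \<le> M * (t - Inf I)^2"
      using mvt_bound[OF cc M a(1) a(3) _ a(2)] t01 by simp
    also have "\<dots> \<le> M * (measure lborel I)^2"
      using w a(3) M0 by (intro mult_left_mono power_mono) auto
    finally have d: "\<bar>snd x - c2 (Inf I)\<bar> \<le> M * (measure lborel I)^2" using t by simp
    have "c1 t \<le> Cm" using t01 Cm by auto
    then have "fst x \<le> Cm" using t by linarith
    then have "x \<in> Kbox Cm (c2 (Inf I)) (M * (measure lborel I)^2)"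
      using d t unfolding Kbox_def by (cases x) (auto simp: abs_le_iff)
    then show ?thesis using E hB by simp
  qed
qed


lemma comp_strict:
  assumes cc: "curve_class c1 c2" and I: "I \<in> components (Tsig s c2)"
    and uv: "u \<in> I" "v \<in> I" "u < v"
  shows "s * (c2 v - c2 u) > 0"
proof -
  obtain z where z: "u < z" "z < v" "c2 v - c2 u = (v - u) * deriv c2 z"
    using MVT2[OF uv(3), of c2 "deriv c2"] cc_facts(1)[OF cc] by blast
  have "z \<in> I" using comp_basic(3)[OF cc I] uv z unfolding is_interval_1 by (meson less_imp_le)
  then have "s * deriv c2 z > 0" using comp_basic(5)[OF cc I] by blast
  then have "(v - u) * (s * deriv c2 z) > 0" using uv by simp
  moreover have "s * (c2 v - c2 u) = (v - u) * (s * deriv c2 z)"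
    unfolding z(3) by (simp only: mult_ac)
  ultimately show ?thesis by linarith
qed

lemma E_meas:
  assumes cc: "curve_class c1 c2" and I: "I \<in> components (Tsig s c2)"
    and s: "s = 1 \<or> s = -1" and hm: "h \<in> borel_measurable borel"
  shows "E_op I c1 c2 h \<in> borel_measurable lborel"
proof -
  have inj: "inj_on c2 I"
  proof (rule inj_onI)
    fix u v assume uv: "u \<in> I" "v \<in> I" "c2 u = c2 v"
    show "u = v"
    proof (rule ccontr)
      assume "u \<noteq> v"
      then consider "u < v" | "v < u" by linarith
      then show False
      proof cases
        case 1 from comp_strict[OF cc I uv(1,2) 1] uv(3) show False by simp
      next
        case 2 from comp_strict[OF cc I uv(2,1) 2] uv(3) show False by simp
      qed
    qed
  qed
  define A where "A = c2 ` I"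
  have "connected A" unfolding A_def
    by (rule connected_continuous_image[OF continuous_on_subset[OF cc_facts(6)[OF cc]]])
       (auto intro: in_components_connected[OF I])
  then have Ai: "is_interval A" by (simp add: is_interval_connected_1)
  then have Ab: "A \<in> sets borel" by (rule real_interval_borel_measurable)
  define g where "g = inv_into I c2"
  have gI: "g y \<in> I" "c2 (g y) = y" if "y \<in> A" for y
    using that unfolding A_def g_def by (auto intro: inv_into_into f_inv_into_f)
  have mono: "mono_on A (\<lambda>y. s * g y)"
  proof (rule mono_onI)
    fix y1 y2 assume y: "y1 \<in> A" "y2 \<in> A" "y1 \<le> y2"
    show "s * g y1 \<le> s * g y2"
    proof (rule ccontr)
      assume nle: "\<not> s * g y1 \<le> s * g y2"
      from s show False
      proof
        assume s1: "s = 1"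
        then have "g y2 < g y1" using nle by simp
        from comp_strict[OF cc I gI(1)[OF y(2)] gI(1)[OF y(1)] this] s1 gI(2) y show False by simp
      next
        assume s1: "s = -1"
        then have "g y1 < g y2" using nle by simp
        from comp_strict[OF cc I gI(1)[OF y(1)] gI(1)[OF y(2)] this] s1 gI(2) y show False by simp
      qed
    qed
  qed
  have m1: "(\<lambda>y. s * g y) \<in> borel_measurable (restrict_space borel A)"
    by (rule borel_measurable_mono_on_fnc[OF mono])
  have "(\<lambda>y. s * (s * g y)) \<in> borel_measurable (restrict_space borel A)"
    using m1 by measurable
  moreover have "(\<lambda>y. s * (s * g y)) = g" using s by auto
  ultimately have m2: "g \<in> borel_measurable (restrict_space borel A)" by simp
  define G where "G y = indicator A y *\<^sub>R g y" for y
  have Gm: "G \<in> borel_measurable borel" unfolding G_def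
    using m2 borel_measurable_restrict_space_iff[of A borel g] Ab by simp
  have GA: "G y = g y" if "y \<in> A" for y using that by (simp add: G_def)
  have eq: "E_op I c1 c2 h x = (if snd x \<in> A \<and> 0 \<le> fst x \<and> fst x \<le> c1 (G (snd x)) then h (G (snd x)) else 0)"
    for x
  proof (cases "\<exists>t\<in>I. c2 t = snd x \<and> 0 \<le> fst x \<and> fst x \<le> c1 t")
    case True
    then obtain t where t: "t \<in> I" "c2 t = snd x" "0 \<le> fst x" "fst x \<le> c1 t" by blast
    have xA: "snd x \<in> A" using t unfolding A_def by force
    have gt: "g (snd x) = t" unfolding g_def using t(1,2) inj by (metis inv_into_f_f)
    have sm: "(SOME t. t \<in> I \<and> c2 t = snd x \<and> 0 \<le> fst x \<and> fst x \<le> c1 t) = t"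
    proof (rule some_equality)
      show "t \<in> I \<and> c2 t = snd x \<and> 0 \<le> fst x \<and> fst x \<le> c1 t" using t by blast
    next
      fix t' assume "t' \<in> I \<and> c2 t' = snd x \<and> 0 \<le> fst x \<and> fst x \<le> c1 t'"
      then show "t' = t" using t inj by (metis inj_on_def)
    qed
    have "E_op I c1 c2 h x = h t" unfolding E_op_def sm using True by (rule if_P)
    moreover have "snd x \<in> A \<and> 0 \<le> fst x \<and> fst x \<le> c1 (G (snd x))"
      using xA t GA[OF xA] gt by simp
    ultimately show ?thesis using GA[OF xA] gt by simp
  next
    case False
    have e0: "E_op I c1 c2 h x = 0" unfolding E_op_def using False by (rule if_not_P)
    have nc: "\<not> (snd x \<in> A \<and> 0 \<le> fst x \<and> fst x \<le> c1 (G (snd x)))"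
    proof
      assume c: "snd x \<in> A \<and> 0 \<le> fst x \<and> fst x \<le> c1 (G (snd x))"
      then have "g (snd x) \<in> I" "c2 (g (snd x)) = snd x" "fst x \<le> c1 (g (snd x))"
        using gI GA by auto
      with c False show False by blast
    qed
    show ?thesis unfolding e0 if_not_P[OF nc] ..
  qed
  have c1m: "c1 \<in> borel_measurable borel" using cc_facts(5)[OF cc] by (rule borel_measurable_continuous_onI)
  have sm: "(\<lambda>x::real\<times>real. G (snd x)) \<in> borel_measurable borel"
    using measurable_comp[OF snd_meas Gm] by (simp add: o_def)
  have "(\<lambda>x::real\<times>real. if snd x \<in> A \<and> 0 \<le> fst x \<and> fst x \<le> c1 (G (snd x)) then h (G (snd x)) else 0)
        \<in> borel_measurable borel"
  proof (rule measurable_If)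
    show "(\<lambda>x::real\<times>real. h (G (snd x))) \<in> borel_measurable borel"
      using measurable_comp[OF sm hm] by (simp add: o_def)
    show "(\<lambda>x::real\<times>real. 0::real) \<in> borel_measurable borel" by simp
    have p1: "{x \<in> space borel. snd x \<in> A} \<in> sets (borel :: (real\<times>real) measure)"
      using measurable_sets[OF snd_meas Ab] by (simp add: vimage_def Int_def)
    have p2: "{x \<in> space borel. 0 \<le> fst x} \<in> sets (borel :: (real\<times>real) measure)"
      using fst_meas by measurable
    have cm: "(\<lambda>x::real\<times>real. c1 (G (snd x))) \<in> borel_measurable borel"
      using measurable_comp[OF sm c1m] by (simp add: o_def)
    have p3: "{x \<in> space borel. fst x \<le> c1 (G (snd x))} \<in> sets (borel :: (real\<times>real) measure)"
      using fst_meas cm by measurable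
    have "{x \<in> space borel. snd x \<in> A \<and> 0 \<le> fst x \<and> fst x \<le> c1 (G (snd x))} =
      {x \<in> space borel. snd x \<in> A} \<inter> {x \<in> space borel. 0 \<le> fst x} \<inter> {x \<in> space borel. fst x \<le> c1 (G (snd x))}"
      by auto
    then show "{x \<in> space borel. snd x \<in> A \<and> 0 \<le> fst x \<and> fst x \<le> c1 (G (snd x))} \<in> sets borel"
      using p1 p2 p3 by simp
  qed
  moreover have "E_op I c1 c2 h = (\<lambda>x. if snd x \<in> A \<and> 0 \<le> fst x \<and> fst x \<le> c1 (G (snd x)) then h (G (snd x)) else 0)"
    by (rule ext) (rule eq)
  ultimately show ?thesis by (simp add: measurable_lborel2)
qed


lemma widths_sum:
  assumes cc: "curve_class c1 c2" and bij: "bij_betw Ip {i. enat i < N} (components (Tsig s c2))"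
  shows "(\<Sum>i. ennreal (if enat i < N then measure lborel (Ip i) else 0)) \<le> 1"
proof -
  define D where "D i = (if enat i < N then Ip i else {})" for i
  have comp: "Ip i \<in> components (Tsig s c2)" if "enat i < N" for i
    using bij that unfolding bij_betw_def by auto
  have eq: "ennreal (if enat i < N then measure lborel (Ip i) else 0) = emeasure lborel (D i)" for i
    using comp_measure(2)[OF cc comp] by (simp add: D_def)
  have sets: "range D \<subseteq> sets lborel" using comp_measure(1)[OF cc comp] by (auto simp: D_def)
  have disj: "disjoint_family D"
    unfolding disjoint_family_on_def
  proof (intro ballI impI)
    fix i j :: nat assume ij: "i \<noteq> j"
    show "D i \<inter> D j = {}"
    proof (cases "enat i < N \<and> enat j < N")
      case True
      then have "Ip i \<noteq> Ip j" using bij ij unfolding bij_betw_def inj_on_def by auto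
      then show ?thesis using components_nonoverlap[OF comp comp] True by (simp add: D_def)
    next
      case False then show ?thesis by (auto simp: D_def)
    qed
  qed
  have "(\<Sum>i. ennreal (if enat i < N then measure lborel (Ip i) else 0)) = emeasure lborel (\<Union>i. D i)"
    unfolding eq by (rule suminf_emeasure[OF sets disj])
  also have "\<dots> \<le> emeasure lborel {0..1::real}"
  proof (intro emeasure_mono)
    show "(\<Union>i. D i) \<subseteq> {0..1}"
    proof
      fix x assume "x \<in> (\<Union>i. D i)"
      then obtain i where i: "enat i < N" "x \<in> Ip i" by (auto simp: D_def split: if_splits)
      then show "x \<in> {0..1}" using comp_basic(1)[OF cc comp[OF i(1)]] by auto
    qed
  qed simp
  finally show ?thesis by simp
qed

lemma sq_int_bound:
  fixes K :: "nat \<Rightarrow> (real \<times> real) set" and w :: "nat \<Rightarrow> real"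
  assumes Ks: "\<And>i. K i \<in> sets lborel" and Km: "\<And>i. emeasure lborel (K i) \<le> ennreal (C * (w i)^2)"
    and w0: "\<And>i. 0 \<le> w i" and C0: "0 \<le> C"
  shows "(\<integral>\<^sup>+x. (\<Sum>i. indicator (K i) x) * (\<Sum>i. indicator (K i) x) \<partial>lborel)
     \<le> ennreal C * ((\<Sum>i. ennreal (w i)) * (\<Sum>i. ennreal (w i)))"
proof -
  let ?f = "\<lambda>i x. indicator (K i) x :: ennreal"
  have pw: "(\<Sum>i. ?f i x) * (\<Sum>j. ?f j x) = (\<Sum>i. \<Sum>j. ?f i x * ?f j x)" for x
    by simp
  have m: "(\<lambda>x. ?f i x * ?f j x) \<in> borel_measurable lborel" for i j
    using Ks by measurable
  have m2: "(\<lambda>x. \<Sum>j. ?f i x * ?f j x) \<in> borel_measurable lborel" for i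
    using m by measurable
  have "(\<integral>\<^sup>+x. (\<Sum>i. ?f i x) * (\<Sum>i. ?f i x) \<partial>lborel) = (\<integral>\<^sup>+x. (\<Sum>i. \<Sum>j. ?f i x * ?f j x) \<partial>lborel)"
    by (simp only: pw)
  also have "\<dots> = (\<Sum>i. \<integral>\<^sup>+x. (\<Sum>j. ?f i x * ?f j x) \<partial>lborel)"
    by (rule nn_integral_suminf[OF m2])
  also have "\<dots> = (\<Sum>i. \<Sum>j. \<integral>\<^sup>+x. ?f i x * ?f j x \<partial>lborel)"
    by (intro suminf_cong nn_integral_suminf m)
  also have "\<dots> \<le> (\<Sum>i. \<Sum>j. ennreal C * (ennreal (w i) * ennreal (w j)))"
  proof (intro suminf_le allI summableI)
    fix i j
    have "(\<integral>\<^sup>+x. ?f i x * ?f j x \<partial>lborel) = emeasure lborel (K i \<inter> K j)"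
      using Ks by (simp add: indicator_inter_arith[symmetric])
    also have "\<dots> \<le> ennreal (C * (w i * w j))"
    proof (cases "w i \<le> w j")
      case True
      have "emeasure lborel (K i \<inter> K j) \<le> emeasure lborel (K i)" using Ks by (intro emeasure_mono) auto
      also have "\<dots> \<le> ennreal (C * (w i)^2)" by (rule Km)
      also have "\<dots> \<le> ennreal (C * (w i * w j))"
        using True w0 C0 by (intro ennreal_leI mult_left_mono) (auto simp: power2_eq_square intro: mult_left_mono)
      finally show ?thesis .
    next
      case False
      have "emeasure lborel (K i \<inter> K j) \<le> emeasure lborel (K j)" using Ks by (intro emeasure_mono) auto
      also have "\<dots> \<le> ennreal (C * (w j)^2)" by (rule Km)
      also have "\<dots> \<le> ennreal (C * (w i * w j))"
        using False w0 C0 by (intro ennreal_leI mult_left_mono) (auto simp: power2_eq_square intro: mult_right_mono)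
      finally show ?thesis .
    qed
    also have "\<dots> = ennreal C * (ennreal (w i) * ennreal (w j))"
      using w0 C0 by (simp add: ennreal_mult)
    finally show "(\<integral>\<^sup>+x. ?f i x * ?f j x \<partial>lborel) \<le> ennreal C * (ennreal (w i) * ennreal (w j))" .
  qed
  also have "\<dots> = ennreal C * ((\<Sum>i. ennreal (w i)) * (\<Sum>i. ennreal (w i)))"
    by (simp add: mult.assoc)
  finally show ?thesis .
qed


lemma ennreal_sq_le: "(a + b) * (a + b) \<le> 2 * (a * a) + 2 * (b * (b::ennreal))"
proof (cases "a = top \<or> b = top")
  case True then show ?thesis by (auto simp: ennreal_mult_top ennreal_top_mult)
next
  case False
  then obtain x y where xy: "a = ennreal x" "b = ennreal y" "0 \<le> x" "0 \<le> y"
    by (metis ennreal_cases)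
  have "(x + y) * (x + y) \<le> 2 * (x * x) + 2 * (y * y)"
    using sum_squares_ge_zero[of "x - y" 0] by (simp add: algebra_simps power2_eq_square)
  then have "ennreal ((x + y) * (x + y)) \<le> ennreal (2 * (x * x) + 2 * (y * y))" by (rule ennreal_leI)
  then show ?thesis using xy by (simp add: ennreal_mult ennreal_plus)
qed

lemma tail_bound_real:
  fixes f g :: "nat \<Rightarrow> real"
  assumes fg: "\<And>i. \<bar>f i\<bar> \<le> B * g i" and g0: "\<And>i. 0 \<le> g i" and sg: "summable g" and B0: "0 \<le> B"
  shows "summable f" "\<bar>\<Sum>i. f (i + n)\<bar> \<le> B * (\<Sum>i. g (i + n))"
proof -
  have sBg: "summable (\<lambda>i. B * g i)" using sg by (rule summable_mult)
  show sf: "summable f" using fg by (intro summable_comparison_test'[OF sBg]) auto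
  have sBg': "summable (\<lambda>i. B * g (i + n))" using sBg by (subst summable_iff_shift[where k=n]) 
  have sa: "summable (\<lambda>i. norm (f (i + n)))"
    using fg by (intro summable_comparison_test'[OF sBg']) auto
  have "\<bar>\<Sum>i. f (i + n)\<bar> \<le> (\<Sum>i. norm (f (i + n)))" using summable_norm[OF sa] by simp
  also have "\<dots> \<le> (\<Sum>i. B * g (i + n))" using fg by (intro suminf_le sa sBg') auto
  also have "\<dots> = B * (\<Sum>i. g (i + n))" using sg by (intro suminf_mult) simp
  finally show "\<bar>\<Sum>i. f (i + n)\<bar> \<le> B * (\<Sum>i. g (i + n))" .
qed

lemma tail_tendsto:
  fixes w :: "nat \<Rightarrow> real"
  assumes "summable w"
  shows "(\<lambda>n. \<Sum>i. w (i + n)) \<longlonglongrightarrow> 0"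
proof -
  have "(\<lambda>n. (\<Sum>i. w i) - (\<Sum>i<n. w i)) \<longlonglongrightarrow> (\<Sum>i. w i) - (\<Sum>i. w i)"
    by (intro tendsto_diff tendsto_const summable_LIMSEQ assms)
  then show ?thesis using suminf_minus_initial_segment[OF assms] by simp
qed


lemma family_facts:
  assumes cc: "curve_class c1 c2" and bij: "bij_betw I {i. enat i < N} (components (Tsig s c2))"
    and s: "s = 1 \<or> s = -1" and hm: "h \<in> borel_measurable borel" and hB: "\<forall>u. \<bar>h u\<bar> \<le> B"
    and Cm: "\<forall>t\<in>{0..1}. c1 t \<le> Cm" "0 < Cm"
    and M: "\<forall>t\<in>{0..1}. \<bar>deriv (deriv c2) t\<bar> \<le> M" "0 < M"
  defines "e \<equiv> \<lambda>i x. if enat i < N then E_op (I i) c1 c2 h x else 0"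
    and "w \<equiv> \<lambda>i. if enat i < N then measure lborel (I i) else 0"
    and "K \<equiv> \<lambda>i. if enat i < N then Kbox Cm (c2 (Inf (I i))) (M * (measure lborel (I i))^2) else {}"
  shows "\<And>i x. \<bar>e i x\<bar> \<le> B * indicator (K i) x"
    "\<And>i. K i \<in> sets lborel"
    "\<And>i. emeasure lborel (K i) \<le> ennreal ((2 * Cm * M) * (w i)^2)"
    "\<And>i. 0 \<le> w i" "summable w"
    "\<And>i. e i \<in> borel_measurable lborel"
proof -
  have comp: "I i \<in> components (Tsig s c2)" if "enat i < N" for i
    using bij that unfolding bij_betw_def by auto
  have B0: "0 \<le> B" using hB order_trans[OF abs_ge_zero] by blast
  show "\<bar>e i x\<bar> \<le> B * indicator (K i) x" for i x
    using E_bound[OF cc comp hB Cm(1) M(1)] B0 by (simp add: e_def K_def)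
  have kc: "Kbox a b c \<in> sets lborel" for a b c
    unfolding Kbox_def by (simp add: borel_closed closed_Times)
  show "K i \<in> sets lborel" for i using kc by (simp add: K_def)
  show w0: "0 \<le> w i" for i by (simp add: w_def measure_nonneg)
  show "emeasure lborel (K i) \<le> ennreal ((2 * Cm * M) * (w i)^2)" for i
  proof (cases "enat i < N")
    case True
    define r where "r = M * (measure lborel (I i))^2"
    have r0: "0 \<le> r" using M(2) by (simp add: r_def)
    have "emeasure lborel (K i) = ennreal (Cm * ((c2 (Inf (I i)) + r) - (c2 (Inf (I i)) - r)))"
      using True box_measure[of Cm "c2 (Inf (I i)) - r" "c2 (Inf (I i)) + r"] Cm(2) r0
      by (simp add: K_def Kbox_def r_def)
    also have "\<dots> = ennreal ((2 * Cm * M) * (w i)^2)" using True by (simp add: r_def w_def mult_ac)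
    finally show ?thesis by simp
  next
    case False then show ?thesis by (simp add: K_def)
  qed
  have "(\<Sum>i. ennreal (w i)) \<le> 1" unfolding w_def by (rule widths_sum[OF cc bij])
  then have "(\<Sum>i. ennreal (w i)) \<noteq> top" by (auto simp: top_unique)
  then show "summable w" using w0 by (intro summable_suminf_not_top)
  show "e i \<in> borel_measurable lborel" for i
  proof (cases "enat i < N")
    case True
    then have "e i = E_op (I i) c1 c2 h" by (simp add: e_def fun_eq_iff)
    then show ?thesis using E_meas[OF cc comp[OF True] s hm] by simp
  next
    case False
    then have "e i = (\<lambda>x. 0)" by (simp add: e_def fun_eq_iff)
    then show ?thesis by simp
  qed
qed


lemma assembly:
  fixes ep em :: "nat \<Rightarrow> real \<times> real \<Rightarrow> real" and Kp Km :: "nat \<Rightarrow> (real \<times> real) set"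
    and wp wm :: "nat \<Rightarrow> real"
  assumes ebp: "\<And>i x. \<bar>ep i x\<bar> \<le> B * indicator (Kp i) x"
    and ebm: "\<And>i x. \<bar>em i x\<bar> \<le> B * indicator (Km i) x"
    and Kps: "\<And>i. Kp i \<in> sets lborel" and Kms: "\<And>i. Km i \<in> sets lborel"
    and Kpm: "\<And>i. emeasure lborel (Kp i) \<le> ennreal (C * (wp i)^2)"
    and Kmm: "\<And>i. emeasure lborel (Km i) \<le> ennreal (C * (wm i)^2)"
    and wp0: "\<And>i. 0 \<le> wp i" and wm0: "\<And>i. 0 \<le> wm i"
    and swp: "summable wp" and swm: "summable wm"
    and epm: "\<And>i. ep i \<in> borel_measurable lborel" and emm: "\<And>i. em i \<in> borel_measurable lborel"
    and B0: "0 < B" and C0: "0 \<le> C"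
  shows "\<exists>F. L2_fun F \<and> L2_tendsto (\<lambda>n x. (\<Sum>i<n. ep i x) - (\<Sum>i<n. em i x)) F"
proof -
  define S where "S n x = (\<Sum>i<n. ep i x) - (\<Sum>i<n. em i x)" for n x
  define F where "F x = lim (\<lambda>n. S n x)" for x
  have Sm: "S n \<in> borel_measurable lborel" for n
    unfolding S_def using epm emm by measurable
  have Fm: "F \<in> borel_measurable lborel"
    unfolding F_def by (rule borel_measurable_lim_metric[OF Sm])
  define Tp where "Tp n x = (\<Sum>i. indicator (Kp (i + n)) x :: ennreal)" for n x
  define Tm where "Tm n x = (\<Sum>i. indicator (Km (i + n)) x :: ennreal)" for n x
  have Tpm: "Tp n \<in> borel_measurable lborel" for n
    unfolding Tp_def using Kps by measurable
  have Tmm: "Tm n \<in> borel_measurable lborel" for n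
    unfolding Tm_def using Kms by measurable
  have Kpb: "Kp i \<in> sets borel" for i using Kps[of i] by simp
  have Kmb: "Km i \<in> sets borel" for i using Kms[of i] by simp
  define rp where "rp n = (\<Sum>i. wp (i + n))" for n
  define rm where "rm n = (\<Sum>i. wm (i + n))" for n
  have rp0: "0 \<le> rp n" for n unfolding rp_def
    using swp wp0 by (intro suminf_nonneg) auto
  have rm0: "0 \<le> rm n" for n unfolding rm_def
    using swm wm0 by (intro suminf_nonneg) auto
  have Wp: "(\<Sum>i. ennreal (wp (i + n))) = ennreal (rp n)" for n
    unfolding rp_def using swp wp0 by (intro suminf_ennreal2) auto
  have Wm: "(\<Sum>i. ennreal (wm (i + n))) = ennreal (rm n)" for n
    unfolding rm_def using swm wm0 by (intro suminf_ennreal2) auto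
  have pw: "ennreal ((S n x - F x)^2) \<le> ennreal (B^2) * ((Tp n x + Tm n x) * (Tp n x + Tm n x))" for n x
  proof (cases "Tp n x = top \<or> Tm n x = top")
    case True
    then have T: "Tp n x + Tm n x = top" by auto
    have nz: "ennreal (B^2) \<noteq> 0" using B0 by simp
    have "ennreal (B^2) * ((Tp n x + Tm n x) * (Tp n x + Tm n x)) = top"
      unfolding T using nz by (simp add: ennreal_mult_top)
    then show ?thesis by simp
  next
    case False
    define gp where "gp i = (indicator (Kp i) x :: real)" for i
    define gm where "gm i = (indicator (Km i) x :: real)" for i
    have gp0: "0 \<le> gp i" for i by (simp add: gp_def)
    have gm0: "0 \<le> gm i" for i by (simp add: gm_def)
    have Tpe: "Tp n x = (\<Sum>i. ennreal (gp (i + n)))" by (simp add: Tp_def gp_def ennreal_indicator)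
    have Tme: "Tm n x = (\<Sum>i. ennreal (gm (i + n)))" by (simp add: Tm_def gm_def ennreal_indicator)
    have "summable (\<lambda>i. gp (i + n))" using False Tpe gp0 by (intro summable_suminf_not_top) auto
    then have sgp: "summable gp" by simp
    have "summable (\<lambda>i. gm (i + n))" using False Tme gm0 by (intro summable_suminf_not_top) auto
    then have sgm: "summable gm" by simp
    have ebx: "\<bar>ep i x\<bar> \<le> B * gp i" for i using ebp by (simp add: gp_def)
    have emx: "\<bar>em i x\<bar> \<le> B * gm i" for i using ebm by (simp add: gm_def)
    note tp = tail_bound_real[of "\<lambda>i. ep i x" B gp, OF ebx gp0 sgp less_imp_le[OF B0]]
    note tm = tail_bound_real[of "\<lambda>i. em i x" B gm, OF emx gm0 sgm less_imp_le[OF B0]]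
    have "(\<lambda>n. S n x) \<longlonglongrightarrow> (\<Sum>i. ep i x) - (\<Sum>i. em i x)"
      unfolding S_def by (intro tendsto_diff summable_LIMSEQ tp(1) tm(1))
    then have Fx: "F x = (\<Sum>i. ep i x) - (\<Sum>i. em i x)" unfolding F_def by (rule limI)
    have "S n x - F x = (\<Sum>i. em (i + n) x) - (\<Sum>i. ep (i + n) x)"
      unfolding Fx S_def using suminf_minus_initial_segment[OF tp(1), of n]
        suminf_minus_initial_segment[OF tm(1), of n] by simp
    then have "\<bar>S n x - F x\<bar> \<le> \<bar>\<Sum>i. em (i + n) x\<bar> + \<bar>\<Sum>i. ep (i + n) x\<bar>" by simp
    also have "\<dots> \<le> B * (\<Sum>i. gm (i + n)) + B * (\<Sum>i. gp (i + n))"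
      using tp(2)[of n] tm(2)[of n] by simp
    finally have ab: "\<bar>S n x - F x\<bar> \<le> B * ((\<Sum>i. gp (i + n)) + (\<Sum>i. gm (i + n)))" by (simp add: algebra_simps)
    define Rp where "Rp = (\<Sum>i. gp (i + n))"
    define Rm where "Rm = (\<Sum>i. gm (i + n))"
    have Rp0: "0 \<le> Rp" unfolding Rp_def using sgp gp0 by (intro suminf_nonneg) auto
    have Rm0: "0 \<le> Rm" unfolding Rm_def using sgm gm0 by (intro suminf_nonneg) auto
    have "(S n x - F x)^2 = \<bar>S n x - F x\<bar>^2" by simp
    also have "\<dots> \<le> (B * (Rp + Rm))^2" using ab unfolding Rp_def Rm_def by (intro power_mono) auto
    finally have sq: "(S n x - F x)^2 \<le> B^2 * ((Rp + Rm) * (Rp + Rm))" by (simp add: power2_eq_square mult_ac)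
    have "Tp n x = ennreal Rp" unfolding Tpe Rp_def using sgp gp0 by (intro suminf_ennreal2) auto
    moreover have "Tm n x = ennreal Rm" unfolding Tme Rm_def using sgm gm0 by (intro suminf_ennreal2) auto
    ultimately have "ennreal (B^2) * ((Tp n x + Tm n x) * (Tp n x + Tm n x)) = ennreal (B^2 * ((Rp + Rm) * (Rp + Rm)))"
      using Rp0 Rm0 by (simp add: ennreal_mult ennreal_plus)
    moreover have "ennreal ((S n x - F x)^2) \<le> ennreal (B^2 * ((Rp + Rm) * (Rp + Rm)))"
      using sq by (rule ennreal_leI)
    ultimately show ?thesis by simp
  qed
  define bd where "bd n = B^2 * (2 * (C * (rp n * rp n)) + 2 * (C * (rm n * rm n)))" for n
  have ib: "(\<integral>\<^sup>+x. ennreal ((S n x - F x)^2) \<partial>lborel) \<le> ennreal (bd n)" for n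
  proof -
    have "(\<integral>\<^sup>+x. ennreal ((S n x - F x)^2) \<partial>lborel)
        \<le> (\<integral>\<^sup>+x. ennreal (B^2) * ((Tp n x + Tm n x) * (Tp n x + Tm n x)) \<partial>lborel)"
      by (intro nn_integral_mono pw)
    also have "\<dots> = ennreal (B^2) * (\<integral>\<^sup>+x. (Tp n x + Tm n x) * (Tp n x + Tm n x) \<partial>lborel)"
      by (intro nn_integral_cmult borel_measurable_times_ennreal borel_measurable_add Tpm Tmm)
    also have "\<dots> \<le> ennreal (B^2) * (\<integral>\<^sup>+x. 2 * (Tp n x * Tp n x) + 2 * (Tm n x * Tm n x) \<partial>lborel)"
      by (intro mult_left_mono nn_integral_mono ennreal_sq_le) auto
    also have "(\<integral>\<^sup>+x. 2 * (Tp n x * Tp n x) + 2 * (Tm n x * Tm n x) \<partial>lborel)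
        = 2 * (\<integral>\<^sup>+x. Tp n x * Tp n x \<partial>lborel) + 2 * (\<integral>\<^sup>+x. Tm n x * Tm n x \<partial>lborel)"
      using Tpm Tmm by (simp add: nn_integral_add nn_integral_cmult)
    also have "(\<integral>\<^sup>+x. Tp n x * Tp n x \<partial>lborel) \<le> ennreal C * (ennreal (rp n) * ennreal (rp n))"
      unfolding Tp_def Wp[symmetric]
      by (rule sq_int_bound[of "\<lambda>i. Kp (i + n)" C "\<lambda>i. wp (i + n)"]) (auto intro: Kps Kpb Kpm wp0 C0)
    also have "(\<integral>\<^sup>+x. Tm n x * Tm n x \<partial>lborel) \<le> ennreal C * (ennreal (rm n) * ennreal (rm n))"
      unfolding Tm_def Wm[symmetric]
      by (rule sq_int_bound[of "\<lambda>i. Km (i + n)" C "\<lambda>i. wm (i + n)"]) (auto intro: Kms Kmb Kmm wm0 C0)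
    also have "ennreal (B^2) * (2 * (ennreal C * (ennreal (rp n) * ennreal (rp n))) + 2 * (ennreal C * (ennreal (rm n) * ennreal (rm n))))
        = ennreal (bd n)"
      unfolding bd_def using rp0[of n] rm0[of n] C0 by (simp add: ennreal_mult ennreal_plus)
    finally show ?thesis by (simp add: mult_left_mono add_mono)
  qed
  have "(\<lambda>n. bd n) \<longlonglongrightarrow> B^2 * (2 * (C * (0 * 0)) + 2 * (C * (0 * 0)))"
    unfolding bd_def rp_def rm_def
    by (intro tendsto_intros tail_tendsto swp swm)
  then have "(\<lambda>n. ennreal (bd n)) \<longlonglongrightarrow> ennreal 0" by (intro tendsto_ennrealI) simp
  then have lim0: "(\<lambda>n. ennreal (bd n)) \<longlonglongrightarrow> 0" by simp
  have lim: "(\<lambda>n. \<integral>\<^sup>+x. ennreal ((S n x - F x)^2) \<partial>lborel) \<longlonglongrightarrow> 0"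
  proof (rule tendsto_sandwich[of "\<lambda>_. 0" _ _ "\<lambda>n. ennreal (bd n)"])
    show "\<forall>\<^sub>F n in sequentially. (0::ennreal) \<le> (\<integral>\<^sup>+x. ennreal ((S n x - F x)^2) \<partial>lborel)"
      by (intro always_eventually allI) simp
    show "\<forall>\<^sub>F n in sequentially. (\<integral>\<^sup>+x. ennreal ((S n x - F x)^2) \<partial>lborel) \<le> ennreal (bd n)"
      by (intro always_eventually allI ib)
  qed (auto intro: lim0)
  have S0: "S 0 x = 0" for x by (simp add: S_def)
  have "(\<integral>\<^sup>+x. ennreal (norm ((F x)^2)) \<partial>lborel) = (\<integral>\<^sup>+x. ennreal ((S 0 x - F x)^2) \<partial>lborel)"
    by (simp add: S0)
  also have "\<dots> \<le> ennreal (bd 0)" by (rule ib)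
  also have "\<dots> < \<infinity>" by simp
  finally have "integrable lborel (\<lambda>x. (F x)^2)"
    by (intro integrableI_bounded) (use Fm in measurable)
  then have "L2_fun F" using Fm by (simp add: L2_fun_def)
  moreover have "L2_tendsto S F" using lim by (simp add: L2_tendsto_def)
  ultimately show ?thesis unfolding S_def by blast
qed


lemma sum_restrict_eq:
  fixes n :: nat
  shows "(\<Sum>i\<in>{i. i < n \<and> P i}. f i) = (\<Sum>i<n. if P i then f i else (0::real))"
proof -
  have "{i. i < n \<and> P i} = {..<n} \<inter> {i. P i}" by auto
  then have "(\<Sum>i\<in>{i. i < n \<and> P i}. f i) = sum f ({..<n} \<inter> {i. P i})" by simp
  also have "\<dots> = (\<Sum>x<n. if x \<in> {i. P i} then f x else 0)" by (rule sum.inter_restrict) simp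
  finally show ?thesis by simp
qed

theorem lemma6p1:
  fixes c1 c2 h :: "real \<Rightarrow> real"
    and Ip Im :: "nat \<Rightarrow> real set"
    and Np Nm :: enat
  assumes "curve_class c1 c2"
    and "h \<in> borel_measurable borel"
    and "bounded (range h)"
    and "bij_betw Ip {i. enat i < Np} (components (T_plus c2))"
    and "bij_betw Im {i. enat i < Nm} (components (T_minus c2))"
  shows "\<exists>F. L2_fun F \<and>
           L2_tendsto
             (\<lambda>n x. (\<Sum>i\<in>{i. i < n \<and> enat i < Np}. E_op (Ip i) c1 c2 h x)
                   - (\<Sum>i\<in>{i. i < n \<and> enat i < Nm}. E_op (Im i) c1 c2 h x)) F"
proof -
  note cc = assms(1) and hm = assms(2)
  obtain B where B: "B > 0" "\<forall>y\<in>range h. norm y \<le> B" using assms(3) bounded_pos by blast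
  then have hB: "\<forall>u. \<bar>h u\<bar> \<le> B" by auto
  obtain Cm where Cm0: "Cm > 0" and Cmb: "\<forall>t\<in>{0..1}. \<bar>c1 t\<bar> \<le> Cm"
    using bound_on01[OF cc_facts(5)[OF cc]] by blast
  have Cm: "\<forall>t\<in>{0..1}. c1 t \<le> Cm" using Cmb by (auto simp: abs_le_iff)
  obtain M where M0: "M > 0" and M: "\<forall>t\<in>{0..1}. \<bar>deriv (deriv c2) t\<bar> \<le> M"
    using bound_on01[OF cc_facts(4)[OF cc]] by blast
  have bp: "bij_betw Ip {i. enat i < Np} (components (Tsig 1 c2))" using assms(4) by (simp add: Tsig_plus)
  have bm: "bij_betw Im {i. enat i < Nm} (components (Tsig (-1) c2))" using assms(5) by (simp add: Tsig_minus)
  note fp = family_facts[OF cc bp _ hm hB Cm Cm0 M M0]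
  note fm = family_facts[OF cc bm _ hm hB Cm Cm0 M M0]
  have C0: "0 \<le> 2 * Cm * M" using Cm0 M0 by simp
  obtain F where F: "L2_fun F" "L2_tendsto (\<lambda>n x.
      (\<Sum>i<n. (if enat i < Np then E_op (Ip i) c1 c2 h x else 0))
    - (\<Sum>i<n. (if enat i < Nm then E_op (Im i) c1 c2 h x else 0))) F"
  proof -
    have "\<exists>F. L2_fun F \<and> L2_tendsto (\<lambda>n x.
      (\<Sum>i<n. (if enat i < Np then E_op (Ip i) c1 c2 h x else 0))
    - (\<Sum>i<n. (if enat i < Nm then E_op (Im i) c1 c2 h x else 0))) F"
      apply (rule assembly[where B=B and C="2 * Cm * M"
         and Kp="\<lambda>i. if enat i < Np then Kbox Cm (c2 (Inf (Ip i))) (M * (measure lborel (Ip i))^2) else {}"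
         and Km="\<lambda>i. if enat i < Nm then Kbox Cm (c2 (Inf (Im i))) (M * (measure lborel (Im i))^2) else {}"
         and wp="\<lambda>i. if enat i < Np then measure lborel (Ip i) else 0"
         and wm="\<lambda>i. if enat i < Nm then measure lborel (Im i) else 0"])
      apply (rule fp(1); simp)
      apply (rule fm(1); simp)
      apply (rule fp(2); simp)
      apply (rule fm(2); simp)
      apply (rule fp(3); simp)
      apply (rule fm(3); simp)
      apply (rule fp(4); simp)
      apply (rule fm(4); simp)
      apply (rule fp(5); simp)
      apply (rule fm(5); simp)
      apply (rule fp(6); simp)
      apply (rule fm(6); simp)
      using B(1) C0 by auto
    then show ?thesis using that by blast
  qed
  show ?thesis using F by (simp only: sum_restrict_eq) blast
qed

end
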